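(* Let $G$ be a connected graph, $c\in V(G)$, and run the scan procedure at $c$ (with any processing order). Let $e$ and $f$ be distinct edges incident to $c$. Then $(e,f)\in(\overline{\alpha}_c\cup\beta_c)^*$ if and only if $(e,f)\in\mathfrak d_c^*$.
   Context: All graphs are finite, simple, undirected; $N(x)$ is the open neighborhood of $x$. For distinct edges $e=vu$, $f=vw$ sharing the vertex $v$, a square spanned by $e$ and $f$ is a 4-cycle $vuxw$ with $x\ne v$ adjacent to both $u$ and $w$; $x$ is its top vertex. The square is chordless if it is an induced 4-cycle ($uw\notin E$, $vx\notin E$); its opposite edge pairs are $\{vu,wx\}$ and $\{vw,ux\}$. The edges $e,f$ span a unique square if $|N(u)\cap N(w)|=2$. A top vertex $x$ is unique if $|N(x)\cap N(v)|=2$. The relation $\delta_G$ on $E(G)$: $(e,f)\in\delta_G$ iff (i) $e,f$ are distinct adjacent edges and it is not the case that they span a unique square and that square is chordless; or (ii) $e,f$ are opposite edges of a chordless square; or (iii) $e=f$. For $v\in V(G)$, $E_v$ is the set of edges incident to $v$, and $\mathfrak d_v=((E_v\times E)\cup(E\times E_v))\cap\delta_G$; $\mathfrak d_v^*$ is its transitive closure (on $E(G)$). Scan procedure at $c$: the vertices of $N(c)$ are called primal, and edges incident to $c$ primal edges. Maintain two sets $I$ (incidence list) and $A$ (absence list) of unordered pairs of primal edges, both initially empty, and for every non-primal vertex $w\ne c$ a record of at most two "recorded primal neighbors" (first and second), initially none. Process the neighbors $u$ of $c$ one by one in an arbitrary order, and for each such $u$ process its neighbors $w\neq c$ in an arbitrary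 order: (1) if $w\in N(c)$, add $\{cu,cw\}$ to $A$; (2) else, if $w$ has no recorded primal neighbor, record $u$ as its first primal neighbor; (3) else, if $w$ has exactly one recorded primal neighbor $v$, record $u$ as its second primal neighbor, and if $\{cu,cv\}\notin I$ add $\{cu,cv\}$ to $I$, otherwise add $\{cu,cv\}$ to $A$; (4) else ($w$ has recorded first and second primal neighbors $v_1,v_2$) add $\{cv_1,cv_2\},\{cv_1,cu\},\{cv_2,cu\}$ to $A$ (the record is not changed). After the procedure, $\beta_c$ is the symmetric relation on primal edges consisting of the pairs in $A$, and $\overline{\alpha}_c$ the symmetric relation consisting of all pairs of primal edges not in $I$. $(\overline{\alpha}_c\cup\beta_c)^*$ denotes the transitive closure of their union (a relation on primal edges). *)

theory Defs
  imports Main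
begin

definition simple_graph :: "'a set \<Rightarrow> 'a set set \<Rightarrow> bool" where
  "simple_graph V E \<longleftrightarrow> finite V \<and>
     (\<forall>e\<in>E. \<exists>u v. e = {u, v} \<and> u \<noteq> v \<and> u \<in> V \<and> v \<in> V)"

definition connected_graph :: "'a set \<Rightarrow> 'a set set \<Rightarrow> bool" where
  "connected_graph V E \<longleftrightarrow> V \<noteq> {} \<and>
     (\<forall>u\<in>V. \<forall>v\<in>V. (u, v) \<in> {(x, y). {x, y} \<in> E}\<^sup>*)"

definition nbhd :: "'a set set \<Rightarrow> 'a \<Rightarrow> 'a set" where
  "nbhd E x = {y. {x, y} \<in> E}"

definition inc_edges :: "'a set set \<Rightarrow> 'a \<Rightarrow> 'a set set" where
  "inc_edges E v = {e \<in> E. v \<in> e}"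

definition chordless_square :: "'a set set \<Rightarrow> 'a \<Rightarrow> 'a \<Rightarrow> 'a \<Rightarrow> 'a \<Rightarrow> bool" where
  "chordless_square E a b c d \<longleftrightarrow> distinct [a, b, c, d] \<and>
     {a, b} \<in> E \<and> {b, c} \<in> E \<and> {c, d} \<in> E \<and> {d, a} \<in> E \<and>
     {a, c} \<notin> E \<and> {b, d} \<notin> E"

text \<open>The edges vu and vw (u \<noteq> w) span a unique square (|N(u) \<inter> N(w)| = 2) and
 that square (with top vertex x \<noteq> v) is chordless.\<close>
definition unique_chordless_square :: "'a set set \<Rightarrow> 'a \<Rightarrow> 'a \<Rightarrow> 'a \<Rightarrow> bool" where
  "unique_chordless_square E v u w \<longleftrightarrow>
     card (nbhd E u \<inter> nbhd E w) = 2 \<and>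
     (\<exists>x. x \<noteq> v \<and> x \<in> nbhd E u \<inter> nbhd E w \<and> {u, w} \<notin> E \<and> {v, x} \<notin> E)"

definition delta :: "'a set set \<Rightarrow> ('a set \<times> 'a set) set" where
  "delta E = {(e, f). e \<in> E \<and> f \<in> E \<and>
     ((\<exists>v u w. e = {v, u} \<and> f = {v, w} \<and> u \<noteq> w \<and> \<not> unique_chordless_square E v u w)
      \<or> (\<exists>a b c d. chordless_square E a b c d \<and> e = {a, b} \<and> f = {c, d})
      \<or> e = f)}"

definition dv :: "'a set set \<Rightarrow> 'a \<Rightarrow> ('a set \<times> 'a set) set" where
  "dv E v = ((inc_edges E v \<times> E) \<union> (E \<times> inc_edges E v)) \<inter> delta E"

text \<open>State: incidence list I, absence list A (sets of
 unordered pairs of primal edges, an unordered pair being a set of edges) and the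
 record of recorded primal neighbours of each vertex (a list of length \<le> 2).\<close>
type_synonym 'a scan_state = "'a set set set \<times> 'a set set set \<times> ('a \<Rightarrow> 'a list)"

definition scan_step :: "'a set set \<Rightarrow> 'a \<Rightarrow> 'a \<Rightarrow> 'a \<Rightarrow> 'a scan_state \<Rightarrow> 'a scan_state" where
  "scan_step E c u w st = (case st of (I, A, r) \<Rightarrow>
     (if w \<in> nbhd E c then (I, insert {{c, u}, {c, w}} A, r)
      else (case r w of
              [] \<Rightarrow> (I, A, r(w := [u]))
            | [v] \<Rightarrow> (if {{c, u}, {c, v}} \<notin> I
                      then (insert {{c, u}, {c, v}} I, A, r(w := [v, u]))
                      else (I, insert {{c, u}, {c, v}} A, r(w := [v, u])))
            | v1 # v2 # _ \<Rightarrow>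
                (I, A \<union> {{{c, v1}, {c, v2}}, {{c, v1}, {c, u}}, {{c, v2}, {c, u}}}, r))))"

text \<open>Run the scan at c: ord is the processing order of N(c), nb u the
 processing order of the neighbours w \<noteq> c of u.\<close>
definition scan_run :: "'a set set \<Rightarrow> 'a \<Rightarrow> 'a list \<Rightarrow> ('a \<Rightarrow> 'a list) \<Rightarrow> 'a scan_state" where
  "scan_run E c ord nb =
     fold (\<lambda>u st. fold (\<lambda>w st'. scan_step E c u w st') (nb u) st) ord ({}, {}, (\<lambda>_. []))"

definition valid_scan_order :: "'a set set \<Rightarrow> 'a \<Rightarrow> 'a list \<Rightarrow> ('a \<Rightarrow> 'a list) \<Rightarrow> bool" where
  "valid_scan_order E c ord nb \<longleftrightarrow> distinct ord \<and> set ord = nbhd E c \<and>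
     (\<forall>u\<in>nbhd E c. distinct (nb u) \<and> set (nb u) = nbhd E u - {c})"

definition scan_I :: "'a set set \<Rightarrow> 'a \<Rightarrow> 'a list \<Rightarrow> ('a \<Rightarrow> 'a list) \<Rightarrow> 'a set set set" where
  "scan_I E c ord nb = fst (scan_run E c ord nb)"

definition scan_A :: "'a set set \<Rightarrow> 'a \<Rightarrow> 'a list \<Rightarrow> ('a \<Rightarrow> 'a list) \<Rightarrow> 'a set set set" where
  "scan_A E c ord nb = fst (snd (scan_run E c ord nb))"

definition beta_c :: "'a set set \<Rightarrow> 'a \<Rightarrow> 'a list \<Rightarrow> ('a \<Rightarrow> 'a list) \<Rightarrow> ('a set \<times> 'a set) set" where
  "beta_c E c ord nb = {(e, f). e \<in> inc_edges E c \<and> f \<in> inc_edges E c \<and> {e, f} \<in> scan_A E c ord nb}"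

definition alpha_bar_c :: "'a set set \<Rightarrow> 'a \<Rightarrow> 'a list \<Rightarrow> ('a \<Rightarrow> 'a list) \<Rightarrow> ('a set \<times> 'a set) set" where
  "alpha_bar_c E c ord nb = {(e, f). e \<in> inc_edges E c \<and> f \<in> inc_edges E c \<and> {e, f} \<notin> scan_I E c ord nb}"

end

theory Submission
  imports Defs
begin

definition stp :: "'a set set \<Rightarrow> 'a \<Rightarrow> ('a \<times> 'a) \<Rightarrow> 'a scan_state \<Rightarrow> 'a scan_state" where
  "stp E c x st = scan_step E c (fst x) (snd x) st"

definition run :: "'a set set \<Rightarrow> 'a \<Rightarrow> ('a \<times> 'a) list \<Rightarrow> 'a scan_state" where
  "run E c xs = fold (stp E c) xs ({}, {}, (\<lambda>_. []))"

definition visits :: "('a \<times> 'a) list \<Rightarrow> 'a \<Rightarrow> 'a list" where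
  "visits xs w = map fst (filter (\<lambda>p. snd p = w) xs)"

abbreviation "rI E c xs \<equiv> fst (run E c xs)"
abbreviation "rA E c xs \<equiv> fst (snd (run E c xs))"
abbreviation "rR E c xs \<equiv> snd (snd (run E c xs))"

lemma run_snoc: "run E c (xs @ [x]) = stp E c x (run E c xs)"
  by (simp add: run_def)

lemma visits_snoc: "visits (xs @ [(u,w0)]) w = (if w = w0 then visits xs w @ [u] else visits xs w)"
  by (simp add: visits_def)

lemma take2_app: "length l \<ge> 2 \<Longrightarrow> take 2 (l @ m) = take 2 l"
  by simp

lemma run_R0: "\<forall>w. rR E c xs w = (if w \<in> nbhd E c then [] else take 2 (visits xs w))"
proof (induction xs rule: rev_induct)
  case Nil
  then show ?case by (simp add: run_def visits_def)
next
  case (snoc x xs)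
  obtain u w0 where x: "x = (u, w0)" by (cases x)
  obtain I A r where st: "run E c xs = (I, A, r)" by (cases "run E c xs") auto
  have r: "\<And>w. r w = (if w \<in> nbhd E c then [] else take 2 (visits xs w))"
    using snoc.IH st by simp
  have "rR E c (xs @ [x]) w = (if w \<in> nbhd E c then [] else take 2 (visits (xs @ [x]) w))" for w
  proof (cases "w0 \<in> nbhd E c")
    case True
    then show ?thesis using r by (auto simp: run_snoc st x stp_def scan_step_def visits_snoc)
  next
    case False
    then have rw0: "r w0 = take 2 (visits xs w0)" using r by simp
    consider "visits xs w0 = []" | a where "visits xs w0 = [a]" | a b l where "visits xs w0 = a # b # l"
      by (metis list.exhaust)
    then show ?thesis
      by cases (use False r rw0 in \<open>auto simp: run_snoc st x stp_def scan_step_def visits_snoc\<close>)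
  qed
  then show ?case by blast
qed

lemma run_R: "rR E c xs w = (if w \<in> nbhd E c then [] else take 2 (visits xs w))"
  using run_R0 by metis

lemma step_mono: "fst st \<subseteq> fst (scan_step E c u w st) \<and> fst (snd st) \<subseteq> fst (snd (scan_step E c u w st))"
  by (cases st) (auto simp: scan_step_def split: list.split)

lemma run_mono: "rI E c xs \<subseteq> rI E c (xs @ ys) \<and> rA E c xs \<subseteq> rA E c (xs @ ys)"
proof (induction ys rule: rev_induct)
  case Nil then show ?case by simp
next
  case (snoc y ys)
  then show ?case using step_mono[of "run E c (xs @ ys)" E c "fst y" "snd y"]
    by (simp add: run_snoc[of E c "xs @ ys", simplified] stp_def) blast
qed

lemma mono_snoc: "rI E c xs \<subseteq> rI E c (xs @ [x]) \<and> rA E c xs \<subseteq> rA E c (xs @ [x])"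
  using run_mono[of E c xs "[x]"] by simp

lemma F1: "(u, w) \<in> set xs \<Longrightarrow> w \<in> nbhd E c \<Longrightarrow> {{c,u},{c,w}} \<in> rA E c xs"
proof (induction xs rule: rev_induct)
  case Nil then show ?case by simp
next
  case (snoc x xs)
  show ?case
  proof (cases "x = (u, w)")
    case True
    obtain I A r where st: "run E c xs = (I, A, r)" by (cases "run E c xs") auto
    show ?thesis using True snoc.prems by (simp add: run_snoc st stp_def scan_step_def)
  next
    case False
    then show ?thesis using snoc mono_snoc[of E c xs x] by auto
  qed
qed

lemma dbl_eq: "{{c,a},{c,b}} = {{c,b},{c,a}}" by (simp add: insert_commute)

lemma F2: "w \<notin> nbhd E c \<Longrightarrow> take 2 (visits xs w) = [a,b] \<Longrightarrow> {{c,a},{c,b}} \<in> rI E c xs"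
proof (induction xs rule: rev_induct)
  case Nil then show ?case by (simp add: visits_def)
next
  case (snoc x xs)
  obtain u w0 where x: "x = (u, w0)" by (cases x)
  obtain I A r where st: "run E c xs = (I, A, r)" by (cases "run E c xs") auto
  show ?case
  proof (cases "w0 = w")
    case False
    then have "take 2 (visits xs w) = [a,b]" using snoc.prems by (simp add: x visits_snoc)
    then show ?thesis using snoc mono_snoc[of E c xs x] by auto
  next
    case True
    have rw: "r w = take 2 (visits xs w)" using run_R[of E c xs w] snoc.prems st by simp
    consider "visits xs w = []" | v where "visits xs w = [v]" | v1 v2 l where "visits xs w = v1 # v2 # l"
      by (metis list.exhaust)
    then show ?thesis
    proof cases
      case 1 then show ?thesis using snoc.prems True by (simp add: x visits_snoc)
    next
      case 2
      then have ab: "a = v" "b = u" using snoc.prems True by (auto simp: x visits_snoc)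
      show ?thesis using rw 2 True snoc.prems ab
        by (auto simp: run_snoc st x stp_def scan_step_def dbl_eq)
    next
      case 3
      then have "take 2 (visits xs w) = [a,b]" using snoc.prems True by (simp add: x visits_snoc)
      then show ?thesis using snoc mono_snoc[of E c xs x] by auto
    qed
  qed
qed

lemma F3: "w \<notin> nbhd E c \<Longrightarrow> visits xs w = a # b # rest \<Longrightarrow> rest \<noteq> [] \<Longrightarrow>
   {{c,a},{c,b}} \<in> rA E c xs \<and> (\<forall>t\<in>set rest. {{c,a},{c,t}} \<in> rA E c xs \<and> {{c,b},{c,t}} \<in> rA E c xs)"
proof (induction xs arbitrary: rest rule: rev_induct)
  case Nil then show ?case by (simp add: visits_def)
next
  case (snoc x xs)
  obtain u w0 where x: "x = (u, w0)" by (cases x)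
  obtain I A r where st: "run E c xs = (I, A, r)" by (cases "run E c xs") auto
  show ?case
  proof (cases "w0 = w")
    case False
    then have "visits xs w = a # b # rest" using snoc.prems by (simp add: x visits_snoc)
    then show ?thesis using snoc mono_snoc[of E c xs x] by blast
  next
    case True
    have rw: "r w = take 2 (visits xs w)" using run_R[of E c xs w] snoc.prems st by simp
    have app: "visits xs w @ [u] = a # b # rest" using snoc.prems True by (simp add: x visits_snoc)
    then obtain rest' where v: "visits xs w = a # b # rest'" and rest: "rest = rest' @ [u]"
    proof -
      have l: "last rest = u" using app snoc.prems(3) by (metis last_ConsR last_snoc list.discI)
      have b: "visits xs w = butlast (a # b # rest)" using app by (metis butlast_snoc)
      have r: "rest = butlast rest @ [u]" using l snoc.prems(3) by (metis append_butlast_last_id)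
      have "visits xs w = a # b # butlast rest" using b snoc.prems(3) by simp
      then show ?thesis using that r by blast
    qed
    have new: "{{c,a},{c,b}} \<in> rA E c (xs @ [x]) \<and> {{c,a},{c,u}} \<in> rA E c (xs @ [x]) \<and> {{c,b},{c,u}} \<in> rA E c (xs @ [x])"
      using rw v True snoc.prems by (auto simp: run_snoc st x stp_def scan_step_def)
    show ?thesis
    proof (cases "rest' = []")
      case True then show ?thesis using new rest by simp
    next
      case False
      then have "{{c,a},{c,b}} \<in> rA E c xs \<and> (\<forall>t\<in>set rest'. {{c,a},{c,t}} \<in> rA E c xs \<and> {{c,b},{c,t}} \<in> rA E c xs)"
        using snoc.IH[OF snoc.prems(1) v] by blast
      then show ?thesis using new rest mono_snoc[of E c xs x] by auto
    qed
  qed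
qed

lemma pair_eq: "{a,b} = {a',b'} \<Longrightarrow> {{c,a},{c,b}} = {{c,a'},{c,b'}}"
  by (auto simp: doubleton_eq_iff insert_commute)

lemma F5_aux:
  assumes x: "x = (u, w0)" and ww: "w0 = w" "w \<noteq> w'" "w \<notin> nbhd E c" "w' \<notin> nbhd E c"
    and t1: "take 2 (visits (xs @ [x]) w) = [a,b]" and t2: "take 2 (visits (xs @ [x]) w') = [a',b']"
    and ab: "{a,b} = {a',b'}"
    and IH: "take 2 (visits xs w) = [a,b] \<Longrightarrow> {{c,a},{c,b}} \<in> rA E c xs"
  shows "{{c,a},{c,b}} \<in> rA E c (xs @ [x])"
proof -
  obtain I A r where st: "run E c xs = (I, A, r)" by (cases "run E c xs") auto
  have rw: "r w = take 2 (visits xs w)" using run_R[of E c xs w] ww st by simp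
  have t2': "take 2 (visits xs w') = [a',b']" using t2 ww by (simp add: x visits_snoc)
  have inI: "{{c,a},{c,b}} \<in> I" using F2[OF ww(4) t2'] st pair_eq[OF ab, of c] by simp
  consider "visits xs w = []" | v where "visits xs w = [v]" | v1 v2 l where "visits xs w = v1 # v2 # l"
    by (metis list.exhaust)
  then show ?thesis
  proof cases
    case 1 then show ?thesis using t1 ww by (simp add: x visits_snoc)
  next
    case 2
    then have ab': "a = v" "b = u" using t1 ww by (auto simp: x visits_snoc)
    show ?thesis using rw 2 ww inI ab'
      by (auto simp: run_snoc st x stp_def scan_step_def dbl_eq)
  next
    case 3
    then have "take 2 (visits xs w) = [a,b]" using t1 ww by (simp add: x visits_snoc)
    then show ?thesis using IH mono_snoc[of E c xs x] by auto
  qed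
qed

lemma F5: "w \<noteq> w' \<Longrightarrow> w \<notin> nbhd E c \<Longrightarrow> w' \<notin> nbhd E c \<Longrightarrow>
   take 2 (visits xs w) = [a,b] \<Longrightarrow> take 2 (visits xs w') = [a',b'] \<Longrightarrow> {a,b} = {a',b'} \<Longrightarrow>
   {{c,a},{c,b}} \<in> rA E c xs"
proof (induction xs arbitrary: w w' a b a' b' rule: rev_induct)
  case Nil then show ?case by (simp add: visits_def)
next
  case (snoc x xs)
  obtain u w0 where x: "x = (u, w0)" by (cases x)
  show ?case
  proof (cases "w0 = w")
    case True
    show ?thesis
    proof (rule F5_aux[OF x True snoc.prems(1-6)])
      assume h: "take 2 (visits xs w) = [a,b]"
      have "take 2 (visits xs w') = [a',b']" using snoc.prems True by (simp add: x visits_snoc)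
      then show "{{c,a},{c,b}} \<in> rA E c xs" using snoc.IH[OF snoc.prems(1-3) h _ snoc.prems(6)] by blast
    qed
  next
    case F: False
    show ?thesis
    proof (cases "w0 = w'")
      case True
      have "{{c,a'},{c,b'}} \<in> rA E c (xs @ [x])"
      proof (rule F5_aux[OF x True _ snoc.prems(3) snoc.prems(2) snoc.prems(5) snoc.prems(4) snoc.prems(6)[symmetric]])
        show "w' \<noteq> w" using snoc.prems(1) by blast
        assume h: "take 2 (visits xs w') = [a',b']"
        have "take 2 (visits xs w) = [a,b]" using snoc.prems F by (simp add: x visits_snoc)
        then show "{{c,a'},{c,b'}} \<in> rA E c xs"
          using snoc.IH[OF _ snoc.prems(3) snoc.prems(2) h _ snoc.prems(6)[symmetric]] snoc.prems(1) by blast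
      qed
      then show ?thesis using pair_eq[OF snoc.prems(6), of c] by simp
    next
      case False
      have "take 2 (visits xs w') = [a',b']" "take 2 (visits xs w) = [a,b]"
        using snoc.prems F False by (simp_all add: x visits_snoc)
      then show ?thesis using snoc.IH[OF snoc.prems(1-3)] snoc.prems(6) mono_snoc[of E c xs x] by blast
    qed
  qed
qed

lemma nb_sym: "x \<in> nbhd E a \<longleftrightarrow> a \<in> nbhd E x"
  by (simp add: nbhd_def insert_commute)

lemma in_visits: "t \<in> set (visits xs w) \<longleftrightarrow> (t, w) \<in> set xs"
  by (auto simp: visits_def image_iff)

lemma distinct_visits: "distinct xs \<Longrightarrow> distinct (visits xs w)"
  by (induction xs) (auto simp: visits_def image_iff)

lemma pair_inj: "a \<noteq> c \<Longrightarrow> b \<noteq> c \<Longrightarrow> u \<noteq> c \<Longrightarrow> v \<noteq> c \<Longrightarrow>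
  {{c,a},{c,b}} = {{c,u},{c,v}} \<Longrightarrow> {a,b} = {u,v}"
  by (simp add: doubleton_eq_iff)

lemma BI: "\<forall>P\<in>rI E c xs. \<exists>w a b. w \<notin> nbhd E c \<and> take 2 (visits xs w) = [a,b] \<and> P = {{c,a},{c,b}}"
proof (induction xs rule: rev_induct)
  case Nil then show ?case by (simp add: run_def)
next
  case (snoc x xs)
  obtain u w0 where x: "x = (u, w0)" by (cases x)
  obtain I A r where st: "run E c xs = (I, A, r)" by (cases "run E c xs") auto
  have old: "\<forall>P\<in>I. \<exists>w a b. w \<notin> nbhd E c \<and> take 2 (visits (xs@[x]) w) = [a,b] \<and> P = {{c,a},{c,b}}"
  proof
    fix P assume "P \<in> I"
    then obtain w a b where "w \<notin> nbhd E c" "take 2 (visits xs w) = [a,b]" "P = {{c,a},{c,b}}"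
      using snoc.IH st by auto
    then show "\<exists>w a b. w \<notin> nbhd E c \<and> take 2 (visits (xs@[x]) w) = [a,b] \<and> P = {{c,a},{c,b}}"
      by (rule_tac x=w in exI) (auto simp: x visits_snoc)
  qed
  show ?case
  proof (cases "w0 \<in> nbhd E c")
    case True then show ?thesis using old by (simp add: run_snoc st x stp_def scan_step_def)
  next
    case False
    have rw: "r w0 = take 2 (visits xs w0)" using run_R[of E c xs w0] False st by simp
    consider "visits xs w0 = []" | v where "visits xs w0 = [v]" | v1 v2 l where "visits xs w0 = v1 # v2 # l"
      by (metis list.exhaust)
    then show ?thesis
    proof cases
      case 1 then show ?thesis using old rw False by (simp add: run_snoc st x stp_def scan_step_def)
    next
      case 2
      have new: "take 2 (visits (xs@[x]) w0) = [v,u]" using 2 by (simp add: x visits_snoc)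
      have "\<exists>w a b. w \<notin> nbhd E c \<and> take 2 (visits (xs@[x]) w) = [a,b] \<and> {{c,u},{c,v}} = {{c,a},{c,b}}"
        using new False dbl_eq by blast
      then show ?thesis using old rw False 2 by (simp add: run_snoc st x stp_def scan_step_def)
    next
      case 3 then show ?thesis using old rw False by (simp add: run_snoc st x stp_def scan_step_def)
    qed
  qed
qed

definition good :: "'a set set \<Rightarrow> 'a \<Rightarrow> 'a \<Rightarrow> 'a \<Rightarrow> bool" where
  "good E c a b \<longleftrightarrow> {a,b} \<in> E \<or>
     (\<exists>x y. x \<noteq> y \<and> x \<noteq> c \<and> y \<noteq> c \<and> x \<in> nbhd E a \<and> x \<in> nbhd E b \<and> y \<in> nbhd E a \<and> y \<in> nbhd E b) \<or>
     (\<exists>x z. x \<notin> nbhd E c \<and> x \<noteq> c \<and> a \<in> nbhd E x \<and> b \<in> nbhd E x \<and> z \<in> nbhd E x \<and> z \<in> nbhd E c \<and> z \<noteq> a \<and> z \<noteq> b)"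

definition goodP :: "'a set set \<Rightarrow> 'a \<Rightarrow> 'a set set \<Rightarrow> bool" where
  "goodP E c P \<longleftrightarrow> (\<exists>a b. P = {{c,a},{c,b}} \<and> a \<in> nbhd E c \<and> b \<in> nbhd E c \<and> a \<noteq> b \<and> good E c a b)"

definition vs :: "'a set set \<Rightarrow> 'a \<Rightarrow> ('a \<times> 'a) list \<Rightarrow> bool" where
  "vs E c xs \<longleftrightarrow> (\<forall>p\<in>set xs. fst p \<in> nbhd E c \<and> snd p \<in> nbhd E (fst p) \<and> snd p \<noteq> c)"

lemma BA:
  assumes noloop: "\<And>a. a \<notin> nbhd E a"
  shows "distinct xs \<Longrightarrow> vs E c xs \<Longrightarrow> \<forall>P\<in>rA E c xs. goodP E c P"
proof (induction xs rule: rev_induct)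
  case Nil then show ?case by (simp add: run_def)
next
  case (snoc x xs)
  obtain u w0 where x: "x = (u, w0)" by (cases x)
  obtain I A r where st: "run E c xs = (I, A, r)" by (cases "run E c xs") auto
  have old: "\<forall>P\<in>A. goodP E c P" using snoc st by (simp add: vs_def)
  have vsx: "\<And>t w. (t, w) \<in> set xs \<Longrightarrow> t \<in> nbhd E c \<and> w \<in> nbhd E t \<and> w \<noteq> c"
    using snoc.prems by (auto simp: vs_def)
  have u: "u \<in> nbhd E c" "w0 \<in> nbhd E u" "w0 \<noteq> c" using snoc.prems by (auto simp: vs_def x)
  have unot: "(u, w0) \<notin> set xs" using snoc.prems by (simp add: x)
  have uc: "u \<noteq> c" using u noloop by metis
  show ?case
  proof (cases "w0 \<in> nbhd E c")
    case True
    have "u \<noteq> w0" using u noloop by metis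
    then have "goodP E c {{c,u},{c,w0}}" using True u
      by (auto simp: goodP_def good_def nbhd_def)
    then show ?thesis using old True by (simp add: run_snoc st x stp_def scan_step_def)
  next
    case False
    have rw: "r w0 = take 2 (visits xs w0)" using run_R[of E c xs w0] False st by simp
    consider "visits xs w0 = []" | v where "visits xs w0 = [v]" | v1 v2 l where "visits xs w0 = v1 # v2 # l"
      by (metis list.exhaust)
    then show ?thesis
    proof cases
      case 1 then show ?thesis using old rw False by (simp add: run_snoc st x stp_def scan_step_def)
    next
      case 2
      have gp: "goodP E c {{c,u},{c,v}}" if inI: "{{c,u},{c,v}} \<in> I"
      proof -
        obtain w' a b where w': "w' \<notin> nbhd E c" "take 2 (visits xs w') = [a,b]" "{{c,u},{c,v}} = {{c,a},{c,b}}"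
          using BI[of E c xs] st inI by auto
        have ab: "a \<in> set (visits xs w')" "b \<in> set (visits xs w')" using w'(2)
          by (metis in_set_takeD list.set_intros(1), metis in_set_takeD list.set_intros)
        have abx: "a \<in> nbhd E c" "w' \<in> nbhd E a" "w' \<noteq> c" "b \<in> nbhd E c" "w' \<in> nbhd E b"
          using ab vsx by (auto simp: in_visits)
        have "(v, w0) \<in> set xs" using 2 in_visits by (metis list.set_intros(1))
        then have vv: "v \<in> nbhd E c" "w0 \<in> nbhd E v" using vsx by auto
        have "a \<noteq> c" "b \<noteq> c" "v \<noteq> c" using abx vv noloop by metis+
        then have uvab: "{u,v} = {a,b}" using pair_inj[of u c v a b] uc w'(3) by blast
        have "w' \<noteq> w0" using w'(2) 2 by auto
        moreover have "u \<noteq> v" using \<open>(v, w0) \<in> set xs\<close> unot by auto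
        moreover have "w' \<in> nbhd E u \<and> w' \<in> nbhd E v" using uvab abx by (auto simp: doubleton_eq_iff)
        ultimately show ?thesis using u vv abx
          unfolding goodP_def good_def by blast
      qed
      then show ?thesis using old rw False 2 by (simp add: run_snoc st x stp_def scan_step_def)
    next
      case 3
      have d: "distinct (visits xs w0)" using snoc.prems distinct_visits by auto
      have "(v1, w0) \<in> set xs" "(v2, w0) \<in> set xs" using 3 in_visits by (metis list.set_intros(1), metis list.set_intros)
      then have vv: "v1 \<in> nbhd E c" "w0 \<in> nbhd E v1" "v2 \<in> nbhd E c" "w0 \<in> nbhd E v2"
        using vsx by auto
      have ne: "v1 \<noteq> v2" "u \<noteq> v1" "u \<noteq> v2" using d 3 unot \<open>(v1, w0) \<in> set xs\<close> \<open>(v2, w0) \<in> set xs\<close> by auto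
      have g: "good E c p q" if "p \<in> {v1,v2,u}" "q \<in> {v1,v2,u}" "p \<noteq> q" for p q
      proof -
        obtain z where "z \<in> {v1,v2,u}" "z \<noteq> p" "z \<noteq> q" using that ne by auto
        moreover have "\<forall>y\<in>{v1,v2,u}. y \<in> nbhd E w0 \<and> y \<in> nbhd E c" using u vv by (auto simp: nbhd_def insert_commute)
        ultimately have "\<exists>x z. x \<notin> nbhd E c \<and> x \<noteq> c \<and> p \<in> nbhd E x \<and> q \<in> nbhd E x \<and> z \<in> nbhd E x \<and> z \<in> nbhd E c \<and> z \<noteq> p \<and> z \<noteq> q"
          using that False u by blast
        then show ?thesis unfolding good_def by blast
      qed
      have "goodP E c {{c,v1},{c,v2}}" "goodP E c {{c,v1},{c,u}}" "goodP E c {{c,v2},{c,u}}"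
        using g ne vv u unfolding goodP_def by blast+
      then show ?thesis using old rw False 3 by (simp add: run_snoc st x stp_def scan_step_def)
    qed
  qed
qed


lemma L2: "distinct l \<Longrightarrow> set l = {u,w} \<Longrightarrow> u \<noteq> w \<Longrightarrow> l = [u,w] \<or> l = [w,u]"
proof -
  assume a: "distinct l" "set l = {u,w}" "u \<noteq> w"
  then have "length l = 2" using distinct_card[of l] by simp
  then obtain p q where "l = [p,q]" by (auto simp: numeral_2_eq_2 length_Suc_conv)
  then show ?thesis using a by (auto simp: doubleton_eq_iff)
qed

lemma L3: "3 \<le> length l \<Longrightarrow> \<exists>a b z rest. l = a # b # z # rest"
  by (auto simp: numeral_3_eq_3 Suc_le_length_iff)

lemma inc_iff: "{c,t} \<in> inc_edges E c \<longleftrightarrow> t \<in> nbhd E c"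
  by (simp add: inc_edges_def nbhd_def)

locale S =
  fixes E :: "'a set set" and c :: 'a and xs :: "('a \<times> 'a) list"
  assumes noloop: "\<And>a. a \<notin> nbhd E a"
    and fin: "\<And>a. finite (nbhd E a)"
    and dist: "distinct xs"
    and edges: "\<And>e. e \<in> E \<Longrightarrow> \<exists>a b. e = {a,b} \<and> a \<noteq> b"
    and full: "\<And>t w. (t, w) \<in> set xs \<longleftrightarrow> t \<in> nbhd E c \<and> w \<in> nbhd E t \<and> w \<noteq> c"
begin

abbreviation "N \<equiv> nbhd E"
abbreviation "Ib \<equiv> rI E c xs"
abbreviation "Ab \<equiv> rA E c xs"
definition "Bt = {(e, f). e \<in> inc_edges E c \<and> f \<in> inc_edges E c \<and> {e, f} \<in> Ab}"
definition "Al = {(e, f). e \<in> inc_edges E c \<and> f \<in> inc_edges E c \<and> {e, f} \<notin> Ib}"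

lemma vsx: "vs E c xs" using full by (auto simp: vs_def)

lemma visset: "w \<notin> N c \<Longrightarrow> w \<noteq> c \<Longrightarrow> set (visits xs w) = N c \<inter> N w"
  using full by (auto simp: in_visits nbhd_def insert_commute)

lemma Bt_in: "t \<in> N c \<Longrightarrow> s \<in> N c \<Longrightarrow> {{c,t},{c,s}} \<in> Ab \<Longrightarrow> ({c,t},{c,s}) \<in> Bt \<and> ({c,s},{c,t}) \<in> Bt"
  by (simp add: Bt_def inc_iff dbl_eq)

lemma K2:
  assumes "x \<notin> N c" "x \<noteq> c" "u \<in> N c \<inter> N x" "w \<in> N c \<inter> N x" "u \<noteq> w" "card (N c \<inter> N x) = 2"
  shows "\<exists>a b. take 2 (visits xs x) = [a,b] \<and> {a,b} = {u,w}"
proof -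
  have f: "finite (N c \<inter> N x)" using fin by simp
  have "N c \<inter> N x = {u,w}"
  proof (rule ccontr)
    assume "N c \<inter> N x \<noteq> {u,w}"
    then obtain z where "z \<in> N c \<inter> N x" "z \<notin> {u,w}" using assms by blast
    then have "{u,w,z} \<subseteq> N c \<inter> N x" using assms by auto
    then have "card {u,w,z} \<le> 2" using card_mono[OF f] assms(6) by metis
    then show False using \<open>z \<notin> {u,w}\<close> assms(5) by auto
  qed
  then have "visits xs x = [u,w] \<or> visits xs x = [w,u]"
    using L2[OF distinct_visits[OF dist, of x]] visset[OF assms(1,2)] assms(5) by simp
  then show ?thesis by auto
qed

lemma K3:
  assumes "x \<notin> N c" "x \<noteq> c" "u \<in> N c \<inter> N x" "w \<in> N c \<inter> N x" "u \<noteq> w" "card (N c \<inter> N x) \<noteq> 2"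
  shows "({c,u},{c,w}) \<in> Bt\<^sup>*"
proof -
  have f: "finite (N c \<inter> N x)" using fin by simp
  have "card (N c \<inter> N x) \<ge> 2"
  proof -
    have "{u,w} \<subseteq> N c \<inter> N x" using assms by auto
    then have "card {u,w} \<le> card (N c \<inter> N x)" by (rule card_mono[OF f])
    then show ?thesis using assms(5) by simp
  qed
  then have "card (N c \<inter> N x) \<ge> 3" using assms(6) by linarith
  moreover have "card (set (visits xs x)) = length (visits xs x)"
    by (rule distinct_card[OF distinct_visits[OF dist]])
  ultimately have "length (visits xs x) \<ge> 3"
    using visset[OF assms(1,2)] by simp
  then obtain a b z rest where l: "visits xs x = a # b # z # rest" using L3 by blast
  have st: "set (visits xs x) = N c \<inter> N x" using visset[OF assms(1,2)] .
  have F: "{{c,a},{c,b}} \<in> Ab \<and> (\<forall>t\<in>set (z # rest). {{c,a},{c,t}} \<in> Ab \<and> {{c,b},{c,t}} \<in> Ab)"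
    using F3[OF assms(1) l] by blast
  have conn: "({c,a},{c,t}) \<in> Bt\<^sup>* \<and> ({c,t},{c,a}) \<in> Bt\<^sup>*" if t: "t \<in> set (visits xs x)" for t
  proof -
    have tn: "t \<in> N c" "a \<in> N c" "b \<in> N c" using t st l by auto
    consider "t = a" | "t = b" | "t \<in> set (z # rest)" using t l by auto
    then show ?thesis
    proof cases
      case 1 then show ?thesis by simp
    next
      case 2 then show ?thesis using Bt_in[of a b] tn F by blast
    next
      case 3 then show ?thesis using Bt_in[of a t] tn F by blast
    qed
  qed
  have "u \<in> set (visits xs x)" "w \<in> set (visits xs x)" using st assms by auto
  then have "({c,u},{c,a}) \<in> Bt\<^sup>*" "({c,a},{c,w}) \<in> Bt\<^sup>*" using conn by blast+
  then show ?thesis by (rule rtrancl_trans)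
qed


lemma nbE: "y \<in> N x \<longleftrightarrow> {x,y} \<in> E" by (simp add: nbhd_def)
lemma nbE': "y \<in> N x \<longleftrightarrow> {y,x} \<in> E" by (simp add: nbhd_def insert_commute)

lemma nbs: "x \<in> nbhd E a \<Longrightarrow> a \<in> nbhd E x"
  by (simp add: nb_sym)

lemma inc_form: "e \<in> inc_edges E c \<Longrightarrow> \<exists>u. e = {c,u} \<and> u \<in> N c"
proof -
  assume e: "e \<in> inc_edges E c"
  have eE: "e \<in> E" "c \<in> e" using e by (auto simp: inc_edges_def)
  then obtain a b where "e = {a,b}" "a \<noteq> b" using edges by blast
  then have ab: "e = {a,b}" "a \<noteq> b" "e \<in> E" "c \<in> e" using eE by auto
  then show ?thesis
  proof (cases "a = c")
    case True then show ?thesis using ab by (auto simp: nbhd_def)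
  next
    case False then have "b = c" using ab by auto
    then show ?thesis using ab by (rule_tac x=a in exI) (auto simp: nbhd_def insert_commute)
  qed
qed

lemma neq_c: "u \<in> N c \<Longrightarrow> u \<noteq> c" using noloop by metis

lemma ucs_unf: "unique_chordless_square E v u w \<longleftrightarrow> card (N u \<inter> N w) = 2 \<and>
   (\<exists>x. x \<noteq> v \<and> x \<in> N u \<and> x \<in> N w \<and> {u,w} \<notin> E \<and> {v,x} \<notin> E)"
  by (simp add: unique_chordless_square_def)

lemma delta_prim1: "u \<in> N c \<Longrightarrow> w \<in> N c \<Longrightarrow> u \<noteq> w \<Longrightarrow> \<not> unique_chordless_square E c u w
   \<Longrightarrow> ({c,u},{c,w}) \<in> dv E c"
  unfolding dv_def delta_def by (auto simp: inc_edges_def nbhd_def)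

lemma delta_prim2: "u \<in> N c \<Longrightarrow> w \<in> N c \<Longrightarrow> u \<noteq> w \<Longrightarrow> ({c,u},{c,w}) \<in> delta E
   \<Longrightarrow> \<not> unique_chordless_square E c u w"
proof -
  assume a: "u \<in> N c" "w \<in> N c" "u \<noteq> w" "({c,u},{c,w}) \<in> delta E"
  have uc: "u \<noteq> c" "w \<noteq> c" using a neq_c by auto
  have "(\<exists>v u' w'. {c,u} = {v, u'} \<and> {c,w} = {v, w'} \<and> u' \<noteq> w' \<and> \<not> unique_chordless_square E v u' w')
      \<or> (\<exists>a b c' d. chordless_square E a b c' d \<and> {c,u} = {a, b} \<and> {c,w} = {c', d})
      \<or> {c,u} = {c,w}" using a(4) by (simp add: delta_def)
  then show ?thesis
  proof (elim disjE exE conjE)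
    fix v u' w' assume h: "{c,u} = {v, u'}" "{c,w} = {v, w'}" "u' \<noteq> w'" "\<not> unique_chordless_square E v u' w'"
    have "v = c" using h(1,2) a(3) by (auto simp: doubleton_eq_iff)
    then have "u' = u" "w' = w" using h(1,2) uc by (auto simp: doubleton_eq_iff)
    then show ?thesis using h \<open>v = c\<close> by simp
  next
    fix a' b c' d assume h: "chordless_square E a' b c' d" "{c,u} = {a', b}" "{c,w} = {c', d}"
    then show ?thesis by (auto simp: chordless_square_def doubleton_eq_iff)
  next
    assume "{c,u} = {c,w}" then show ?thesis using a(3) uc by (auto simp: doubleton_eq_iff)
  qed
qed

lemma L1:
  assumes "u \<in> N c" "w \<in> N c" "u \<noteq> w" "x \<notin> N c" "x \<noteq> c" "u \<in> N x" "w \<in> N x" "{u,w} \<notin> E"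
    "card (N c \<inter> N x) \<noteq> 2"
  shows "({c,u},{c,w}) \<in> (dv E c)\<^sup>*"
proof -
  have ne: "u \<noteq> x" "w \<noteq> x" "u \<noteq> c" "w \<noteq> c" using assms noloop by metis+
  have sq: "chordless_square E u x w c"
    using assms ne unfolding chordless_square_def by (auto simp: nbhd_def insert_commute)
  have e1: "{u,x} \<in> E" "{w,c} \<in> E" "{c,u} \<in> E" using sq by (auto simp: chordless_square_def insert_commute)
  have "({u,x},{w,c}) \<in> delta E"
    using sq e1 unfolding delta_def by blast
  then have d1: "({u,x},{c,w}) \<in> dv E c"
    using e1 unfolding dv_def inc_edges_def by (simp add: insert_commute)
  have "\<not> unique_chordless_square E u c x" using assms(9) by (simp add: ucs_unf)
  then have d2: "({c,u},{u,x}) \<in> dv E c"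
    using e1 assms(5) unfolding dv_def delta_def inc_edges_def
    by simp (metis insert_commute)
  show ?thesis using d1 d2 by (meson converse_rtrancl_into_rtrancl r_into_rtrancl)
qed


lemma good_sym: "good E c a b \<Longrightarrow> good E c b a"
  unfolding good_def by (auto simp: insert_commute)

lemma card3: "finite T \<Longrightarrow> a \<in> T \<Longrightarrow> b \<in> T \<Longrightarrow> d \<in> T \<Longrightarrow> a \<noteq> b \<Longrightarrow> a \<noteq> d \<Longrightarrow> b \<noteq> d \<Longrightarrow> card T \<noteq> 2"
proof -
  assume h: "finite T" "a \<in> T" "b \<in> T" "d \<in> T" "a \<noteq> b" "a \<noteq> d" "b \<noteq> d"
  have "{a,b,d} \<subseteq> T" using h by auto
  then have "card {a,b,d} \<le> card T" by (rule card_mono[OF h(1)])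
  then show ?thesis using h by simp
qed

lemma AB_dv: "(e, f) \<in> Al \<union> Bt \<Longrightarrow> (e, f) \<in> (dv E c)\<^sup>*"
proof -
  assume ef: "(e, f) \<in> Al \<union> Bt"
  have "e \<in> inc_edges E c" "f \<in> inc_edges E c" using ef by (auto simp: Al_def Bt_def)
  then obtain u w where uw: "e = {c,u}" "u \<in> N c" "f = {c,w}" "w \<in> N c" using inc_form by blast
  show ?thesis
  proof (cases "u = w")
    case True then show ?thesis using uw by simp
  next
    case neq: False
    show ?thesis
    proof (cases "unique_chordless_square E c u w")
      case False then show ?thesis using delta_prim1[OF uw(2,4) neq] uw by auto
    next
      case True
      then obtain x where x: "x \<noteq> c" "x \<in> N u" "x \<in> N w" "{u,w} \<notin> E" "{c,x} \<notin> E" "card (N u \<inter> N w) = 2"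
        by (auto simp: ucs_unf)
      have xc: "x \<notin> N c" using x(5) by (simp add: nbE)
      from ef show ?thesis
      proof
        assume al: "(e, f) \<in> Al"
        show ?thesis
        proof (cases "card (N c \<inter> N x) = 2")
          case False
          then show ?thesis using L1[OF uw(2,4) neq xc x(1)] x uw by (simp add: nb_sym)
        next
          case True
          obtain a b where ab: "take 2 (visits xs x) = [a,b]" "{a,b} = {u,w}"
            using K2[OF xc x(1) _ _ neq True] uw x by (auto simp: nb_sym)
          have "{{c,a},{c,b}} \<in> Ib" using F2[OF xc ab(1)] by simp
          then have "{e,f} \<in> Ib" using pair_eq[OF ab(2), of c] uw by simp
          then show ?thesis using al by (simp add: Al_def)
        qed
      next
        assume bt: "(e, f) \<in> Bt"
        then have "{e,f} \<in> Ab" by (simp add: Bt_def)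
        then obtain a b where ab: "{{c,u},{c,w}} = {{c,a},{c,b}}" "a \<in> N c" "b \<in> N c" "a \<noteq> b" "good E c a b"
          using BA[OF noloop dist vsx] uw by (auto simp: goodP_def)
        have "{u,w} = {a,b}" using pair_inj[OF neq_c neq_c neq_c neq_c ab(1)] uw ab by blast
        then have g: "good E c u w" using ab(5) good_sym by (auto simp: doubleton_eq_iff)
        have fu: "finite (N u \<inter> N w)" using fin by simp
        from g show ?thesis unfolding good_def
        proof (elim disjE exE conjE)
          assume "{u,w} \<in> E" then show ?thesis using x by simp
        next
          fix y z assume h: "y \<noteq> z" "y \<noteq> c" "z \<noteq> c" "y \<in> N u" "y \<in> N w" "z \<in> N u" "z \<in> N w"
          have "c \<in> N u" "c \<in> N w" using nbs uw by auto
          then have "card (N u \<inter> N w) \<noteq> 2" using card3[OF fu, of c y z] h by auto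
          then show ?thesis using x by simp
        next
          fix y z assume h: "y \<notin> N c" "y \<noteq> c" "u \<in> N y" "w \<in> N y" "z \<in> N y" "z \<in> N c" "z \<noteq> u" "z \<noteq> w"
          have "card (N c \<inter> N y) \<noteq> 2" using card3[OF _ _ _ _ neq, of "N c \<inter> N y" z] h uw fin by auto
          then show ?thesis using L1[OF uw(2,4) neq h(1,2,3,4) x(4)] uw by simp
        qed
      qed
    qed
  qed
qed


lemma Bt_R: "(a, b) \<in> Bt\<^sup>* \<Longrightarrow> (a, b) \<in> (Al \<union> Bt)\<^sup>*"
  using rtrancl_mono[of Bt "Al \<union> Bt"] by blast

lemma sym_R: "sym (Al \<union> Bt)"
  unfolding sym_def Al_def Bt_def by (auto simp: insert_commute)

lemma R_sym: "(a, b) \<in> (Al \<union> Bt)\<^sup>* \<Longrightarrow> (b, a) \<in> (Al \<union> Bt)\<^sup>*"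
  using sym_rtrancl[OF sym_R] by (auto simp: sym_def)

lemma adjA: "u \<in> N c \<Longrightarrow> w \<in> N c \<Longrightarrow> w \<in> N u \<Longrightarrow> ({c,u},{c,w}) \<in> Bt"
  using F1[of u w xs E c] full neq_c Bt_in by blast

lemma P1: "u \<in> N c \<Longrightarrow> w \<in> N c \<Longrightarrow> ({c,u},{c,w}) \<in> delta E \<Longrightarrow> ({c,u},{c,w}) \<in> (Al \<union> Bt)\<^sup>*"
proof -
  assume a: "u \<in> N c" "w \<in> N c" "({c,u},{c,w}) \<in> delta E"
  show ?thesis
  proof (cases "u = w")
    case True then show ?thesis by simp
  next
    case neq: False
    have nu: "\<not> unique_chordless_square E c u w" using delta_prim2[OF a(1,2) neq a(3)] .
    show ?thesis
    proof (cases "{u,w} \<in> E")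
      case True
      then have "({c,u},{c,w}) \<in> Bt" using adjA[OF a(1,2)] by (simp add: nbE)
      then show ?thesis by blast
    next
      case nE: False
      show ?thesis
      proof (cases "{{c,u},{c,w}} \<in> Ib")
        case False
        then have "({c,u},{c,w}) \<in> Al" using a by (simp add: Al_def inc_iff)
        then show ?thesis by blast
      next
        case True
        then obtain x a' b' where x: "x \<notin> N c" "take 2 (visits xs x) = [a',b']" "{{c,u},{c,w}} = {{c,a'},{c,b'}}"
          using bspec[OF BI[of E c xs] True] by blast
        have inv: "a' \<in> set (visits xs x)" "b' \<in> set (visits xs x)" using x(2)
          by (metis in_set_takeD list.set_intros(1), metis in_set_takeD list.set_intros)
        then have abx: "a' \<in> N c" "x \<in> N a'" "x \<noteq> c" "b' \<in> N c" "x \<in> N b'"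
          using full by (auto simp: in_visits)
        have uwab: "{u,w} = {a',b'}" using pair_inj[OF neq_c neq_c neq_c neq_c x(3)] a abx by blast
        have xuw: "x \<in> N u" "x \<in> N w" using uwab abx by (auto simp: doubleton_eq_iff)
        have cx: "{c,x} \<notin> E" using x(1) by (simp add: nbE)
        have c2: "card (N u \<inter> N w) \<noteq> 2" using nu xuw abx(3) nE cx by (auto simp: ucs_unf)
        have cin: "c \<in> N u \<inter> N w" using nbs[OF a(1)] nbs[OF a(2)] by blast
        have "\<exists>y. y \<in> N u \<inter> N w \<and> y \<noteq> c \<and> y \<noteq> x"
        proof (rule ccontr)
          assume "\<nexists>y. y \<in> N u \<inter> N w \<and> y \<noteq> c \<and> y \<noteq> x"
          then have "N u \<inter> N w \<subseteq> {c,x}" by blast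
          moreover have "{c,x} \<subseteq> N u \<inter> N w" using cin xuw by simp
          ultimately have "N u \<inter> N w = {c,x}" by (rule antisym)
          then show False using c2 abx(3) by simp
        qed
        then obtain y where y: "y \<in> N u \<inter> N w" "y \<noteq> c" "y \<noteq> x" by blast
        show ?thesis
        proof (cases "y \<in> N c")
          case True
          have "({c,u},{c,y}) \<in> Bt" "({c,y},{c,w}) \<in> Bt"
          proof -
            have "y \<in> N u" "w \<in> N y" using y nbs[of y w] by auto
            then show "({c,u},{c,y}) \<in> Bt" "({c,y},{c,w}) \<in> Bt"
              using adjA[OF a(1) True] adjA[OF True a(2)] by blast+
          qed
          then have "({c,u},{c,w}) \<in> Bt\<^sup>*" by (meson r_into_rtrancl rtrancl_trans)
          then show ?thesis by (rule Bt_R)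
        next
          case yc: False
          have ucy: "u \<in> N c \<inter> N y" "w \<in> N c \<inter> N y" using a y nbs[of y u] nbs[of y w] by auto
          show ?thesis
          proof (cases "card (N c \<inter> N y) = 2")
            case False
            then show ?thesis using K3[OF yc y(2) ucy neq] Bt_R by blast
          next
            case True
            obtain a'' b'' where ab'': "take 2 (visits xs y) = [a'',b'']" "{a'',b''} = {u,w}"
              using K2[OF yc y(2) ucy neq True] by blast
            have "{{c,a'},{c,b'}} \<in> Ab"
              using F5[OF y(3)[symmetric] x(1) yc x(2) ab''(1)] uwab ab''(2) by simp
            then have "({c,u},{c,w}) \<in> Bt" using x(3) a Bt_in by auto
            then show ?thesis by blast
          qed
        qed
      qed
    qed
  qed
qed


lemma delta_sym: "(g, h) \<in> delta E \<Longrightarrow> (h, g) \<in> delta E"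
proof -
  assume a: "(g, h) \<in> delta E"
  have ucs_sym: "unique_chordless_square E v u w \<Longrightarrow> unique_chordless_square E v w u" for v u w
    by (auto simp: ucs_unf Int_commute insert_commute)
  have cs_sym: "chordless_square E a b c' d \<Longrightarrow> chordless_square E c' d a b" for a b c' d
    by (auto simp: chordless_square_def insert_commute)
  have gh: "g \<in> E" "h \<in> E" using a by (auto simp: delta_def)
  have "(\<exists>v u w. g = {v, u} \<and> h = {v, w} \<and> u \<noteq> w \<and> \<not> unique_chordless_square E v u w)
      \<or> (\<exists>a b c' d. chordless_square E a b c' d \<and> g = {a, b} \<and> h = {c', d})
      \<or> g = h" using a by (simp add: delta_def)
  then have "(\<exists>v u w. h = {v, u} \<and> g = {v, w} \<and> u \<noteq> w \<and> \<not> unique_chordless_square E v u w)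
      \<or> (\<exists>a b c' d. chordless_square E a b c' d \<and> h = {a, b} \<and> g = {c', d})
      \<or> h = g"
  proof (elim disjE exE conjE)
    fix v u w assume "g = {v, u}" "h = {v, w}" "u \<noteq> w" "\<not> unique_chordless_square E v u w"
    then have "h = {v, w} \<and> g = {v, u} \<and> w \<noteq> u \<and> \<not> unique_chordless_square E v w u"
      using ucs_sym by blast
    then show ?thesis by blast
  next
    fix a b c' d assume "chordless_square E a b c' d" "g = {a, b}" "h = {c', d}"
    then have "chordless_square E c' d a b \<and> h = {c', d} \<and> g = {a, b}" using cs_sym by blast
    then show ?thesis by blast
  qed simp
  then show ?thesis using gh by (simp add: delta_def)
qed

lemma shape:
  assumes u: "u \<in> N c" and g: "g \<in> E" "c \<notin> g" and d: "({c,u}, g) \<in> delta E"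
  shows "(\<exists>x. g = {u,x} \<and> x \<noteq> c \<and> \<not> unique_chordless_square E u c x) \<or>
         (\<exists>p q. g = {p,q} \<and> q \<in> N c \<and> p \<in> N u \<and> p \<in> N q \<and> p \<notin> N c \<and> {u,q} \<notin> E \<and> p \<noteq> c \<and> q \<noteq> u)"
proof -
  have uc: "u \<noteq> c" using u neq_c by blast
  have "(\<exists>v u' w'. {c,u} = {v, u'} \<and> g = {v, w'} \<and> u' \<noteq> w' \<and> \<not> unique_chordless_square E v u' w')
      \<or> (\<exists>a b c' d. chordless_square E a b c' d \<and> {c,u} = {a, b} \<and> g = {c', d})
      \<or> {c,u} = g" using d by (simp add: delta_def)
  then show ?thesis
  proof (elim disjE exE conjE)
    fix v u' w' assume h: "{c,u} = {v, u'}" "g = {v, w'}" "u' \<noteq> w'" "\<not> unique_chordless_square E v u' w'"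
    have "v \<noteq> c" using h(2) g(2) by auto
    then have "v = u" "u' = c" using h(1) by (auto simp: doubleton_eq_iff)
    moreover have "w' \<noteq> c" using h(2) g(2) by auto
    ultimately show ?thesis using h by blast
  next
    fix a b c' d assume h: "chordless_square E a b c' d" "{c,u} = {a, b}" "g = {c', d}"
    have "(a = c \<and> b = u) \<or> (a = u \<and> b = c)" using h(2) by (auto simp: doubleton_eq_iff)
    then show ?thesis
    proof
      assume ab: "a = c \<and> b = u"
      have "g = {c', d} \<and> d \<in> N c \<and> c' \<in> N u \<and> c' \<in> N d \<and> c' \<notin> N c \<and> {u,d} \<notin> E \<and> c' \<noteq> c \<and> d \<noteq> u"
        using h(1,3) ab by (auto simp: chordless_square_def nbhd_def insert_commute)
      then show ?thesis by blast
    next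
      assume ab: "a = u \<and> b = c"
      have "g = {d, c'} \<and> c' \<in> N c \<and> d \<in> N u \<and> d \<in> N c' \<and> d \<notin> N c \<and> {u,c'} \<notin> E \<and> d \<noteq> c \<and> c' \<noteq> u"
        using h(1,3) ab by (auto simp: chordless_square_def nbhd_def insert_commute)
      then show ?thesis by blast
    qed
  next
    assume "{c,u} = g" then show ?thesis using g(2) by auto
  qed
qed


lemma P2_AB:
  assumes "u \<in> N c" "w \<in> N c" "u \<noteq> w" "g = {u,x}" "x \<noteq> c" "\<not> unique_chordless_square E u c x"
    "g = {p,q}" "q \<in> N c" "p \<in> N w" "p \<notin> N c" "{w,q} \<notin> E" "g \<in> E"
  shows "({c,u},{c,w}) \<in> Bt\<^sup>*"
proof -
  have "u \<noteq> p" using assms(1,10) by blast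
  then have qp: "u = q" "x = p" using assms(4,7) by (auto simp: doubleton_eq_iff)
  have xw: "w \<in> N x" using nbs assms(9) qp by blast
  have ux: "u \<in> N x" using assms(4,12) by (simp add: nbE')
  have cx: "{c,x} \<notin> E" using assms(10) qp by (simp add: nbE)
  have uw: "{u,w} \<notin> E" using assms(11) qp by (simp add: insert_commute)
  have "card (N c \<inter> N x) \<noteq> 2"
  proof
    assume "card (N c \<inter> N x) = 2"
    then have "unique_chordless_square E u c x"
      unfolding ucs_unf
    proof (intro conjI exI[of _ w])
      show "w \<noteq> u" using assms(3) by blast
    qed (use assms(2) xw cx uw \<open>card (N c \<inter> N x) = 2\<close> in auto)
    then show False using assms(6) by blast
  qed
  then show ?thesis using K3[of x u w] assms(1,2,3,5,10) qp ux xw by blast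
qed

lemma P2:
  assumes u: "u \<in> N c" and w: "w \<in> N c" and g: "g \<in> E" "c \<notin> g"
    and d1: "({c,u}, g) \<in> delta E" and d2: "(g, {c,w}) \<in> delta E"
  shows "({c,u},{c,w}) \<in> (Al \<union> Bt)\<^sup>*"
proof (cases "u = w")
  case True then show ?thesis by simp
next
  case neq: False
  note S1 = shape[OF u g d1] and S2 = shape[OF w g delta_sym[OF d2]]
  from S1 show ?thesis
  proof (elim disjE exE conjE)
    fix x assume h1: "g = {u,x}" "x \<noteq> c" "\<not> unique_chordless_square E u c x"
    from S2 show ?thesis
    proof (elim disjE exE conjE)
      fix y assume h2: "g = {w,y}" "y \<noteq> c" "\<not> unique_chordless_square E w c y"
      have "{u,w} \<in> E" using h1 h2 neq g(1) by (auto simp: doubleton_eq_iff insert_commute)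
      then have "({c,u},{c,w}) \<in> Bt" using adjA[OF u w] by (simp add: nbE)
      then show ?thesis by blast
    next
      fix p q assume h2: "g = {p,q}" "q \<in> N c" "p \<in> N w" "p \<in> N q" "p \<notin> N c" "{w,q} \<notin> E" "p \<noteq> c" "q \<noteq> w"
      show ?thesis using P2_AB[OF u w neq h1 h2(1,2,3,5,6) g(1)] Bt_R by blast
    qed
  next
    fix p q assume h1: "g = {p,q}" "q \<in> N c" "p \<in> N u" "p \<in> N q" "p \<notin> N c" "{u,q} \<notin> E" "p \<noteq> c" "q \<noteq> u"
    from S2 show ?thesis
    proof (elim disjE exE conjE)
      fix y assume h2: "g = {w,y}" "y \<noteq> c" "\<not> unique_chordless_square E w c y"
      have "({c,w},{c,u}) \<in> Bt\<^sup>*" using P2_AB[OF w u _ h2 h1(1,2,3,5,6) g(1)] neq by blast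
      then show ?thesis using Bt_R R_sym by blast
    next
      fix p' q' assume h2: "g = {p',q'}" "q' \<in> N c" "p' \<in> N w" "p' \<in> N q'" "p' \<notin> N c" "{w,q'} \<notin> E" "p' \<noteq> c" "q' \<noteq> w"
      have "q \<noteq> p'" using h1(2) h2(5) by blast
      then have pq: "p' = p" "q' = q" using h1(1) h2(1) by (auto simp: doubleton_eq_iff)
      have m: "u \<in> N c \<inter> N p" "w \<in> N c \<inter> N p" "q \<in> N c \<inter> N p"
        using u w h1 h2 pq nbs by auto
      have "card (N c \<inter> N p) \<noteq> 2"
        using card3[OF _ m neq] h1(8) h2(8) pq fin by auto
      then show ?thesis using K3[OF h1(5,7) m(1,2) neq] Bt_R by blast
    qed
  qed
qed


definition "Q e g \<longleftrightarrow> (g \<in> inc_edges E c \<and> (e, g) \<in> (Al \<union> Bt)\<^sup>*) \<or>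
   (g \<in> E \<and> c \<notin> g \<and> (\<exists>h\<in>inc_edges E c. (e, h) \<in> (Al \<union> Bt)\<^sup>* \<and> (h, g) \<in> delta E))"

lemma Q_step: "Q e g \<Longrightarrow> (g, g') \<in> dv E c \<Longrightarrow> Q e g'"
proof -
  assume q: "Q e g" and d: "(g, g') \<in> dv E c"
  have dd: "(g, g') \<in> delta E" "g \<in> inc_edges E c \<or> g' \<in> inc_edges E c" "g \<in> E" "g' \<in> E"
    using d by (auto simp: dv_def inc_edges_def)
  from q show ?thesis unfolding Q_def
  proof (elim disjE conjE bexE)
    assume g: "g \<in> inc_edges E c" and r: "(e, g) \<in> (Al \<union> Bt)\<^sup>*"
    show "(g' \<in> inc_edges E c \<and> (e, g') \<in> (Al \<union> Bt)\<^sup>*) \<or>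
      (g' \<in> E \<and> c \<notin> g' \<and> (\<exists>h\<in>inc_edges E c. (e, h) \<in> (Al \<union> Bt)\<^sup>* \<and> (h, g') \<in> delta E))"
    proof (cases "g' \<in> inc_edges E c")
      case True
      obtain u where u: "g = {c,u}" "u \<in> N c" using inc_form[OF g] by blast
      obtain w where w: "g' = {c,w}" "w \<in> N c" using inc_form[OF True] by blast
      have "(g, g') \<in> (Al \<union> Bt)\<^sup>*" using P1[OF u(2) w(2)] dd(1) u w by simp
      then show ?thesis using r True by (meson rtrancl_trans)
    next
      case False
      then have "c \<notin> g'" using dd(4) by (simp add: inc_edges_def)
      then show ?thesis using g r dd by blast
    qed
  next
    fix h assume g: "g \<in> E" "c \<notin> g" and h: "h \<in> inc_edges E c" "(e, h) \<in> (Al \<union> Bt)\<^sup>*" "(h, g) \<in> delta E"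
    have g': "g' \<in> inc_edges E c" using dd(2) g by (auto simp: inc_edges_def)
    obtain u where u: "h = {c,u}" "u \<in> N c" using inc_form[OF h(1)] by blast
    obtain w where w: "g' = {c,w}" "w \<in> N c" using inc_form[OF g'] by blast
    have "(h, g') \<in> (Al \<union> Bt)\<^sup>*" using P2[OF u(2) w(2) g] h(3) dd(1) u w by simp
    then have "(e, g') \<in> (Al \<union> Bt)\<^sup>*" using h(2) by (meson rtrancl_trans)
    then show "(g' \<in> inc_edges E c \<and> (e, g') \<in> (Al \<union> Bt)\<^sup>*) \<or>
      (g' \<in> E \<and> c \<notin> g' \<and> (\<exists>h\<in>inc_edges E c. (e, h) \<in> (Al \<union> Bt)\<^sup>* \<and> (h, g') \<in> delta E))"
      using g' by blast
  qed
qed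

lemma dv_AB: "e \<in> inc_edges E c \<Longrightarrow> (e, f) \<in> (dv E c)\<^sup>+ \<Longrightarrow> f \<in> inc_edges E c \<Longrightarrow> (e, f) \<in> (Al \<union> Bt)\<^sup>*"
proof -
  assume e: "e \<in> inc_edges E c" and ef: "(e, f) \<in> (dv E c)\<^sup>+" and f: "f \<in> inc_edges E c"
  have q0: "Q e e" using e by (simp add: Q_def)
  have "Q e f" using ef
  proof (induction rule: trancl_induct)
    case (base y) then show ?case using Q_step[OF q0] by blast
  next
    case (step y z) then show ?case using Q_step by blast
  qed
  then show ?thesis using f by (simp add: Q_def inc_edges_def)
qed

lemma main_S: "e \<in> inc_edges E c \<Longrightarrow> f \<in> inc_edges E c \<Longrightarrow> e \<noteq> f \<Longrightarrow>
  (e, f) \<in> (Al \<union> Bt)\<^sup>+ \<longleftrightarrow> (e, f) \<in> (dv E c)\<^sup>+"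
proof
  assume "e \<noteq> f" "(e, f) \<in> (Al \<union> Bt)\<^sup>+"
  then have "(e, f) \<in> (Al \<union> Bt)\<^sup>*" by simp
  moreover have "Al \<union> Bt \<subseteq> (dv E c)\<^sup>*" using AB_dv by auto
  ultimately have "(e, f) \<in> (dv E c)\<^sup>*" using rtrancl_subset_rtrancl by blast
  then show "(e, f) \<in> (dv E c)\<^sup>+" using \<open>e \<noteq> f\<close> by (simp add: rtrancl_eq_or_trancl)
next
  assume "e \<in> inc_edges E c" "f \<in> inc_edges E c" "e \<noteq> f" "(e, f) \<in> (dv E c)\<^sup>+"
  then have "(e, f) \<in> (Al \<union> Bt)\<^sup>*" using dv_AB by blast
  then show "(e, f) \<in> (Al \<union> Bt)\<^sup>+" using \<open>e \<noteq> f\<close> by (simp add: rtrancl_eq_or_trancl)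
qed

end

definition steps :: "'a list \<Rightarrow> ('a \<Rightarrow> 'a list) \<Rightarrow> ('a \<times> 'a) list" where
  "steps ord nb = concat (map (\<lambda>u. map (Pair u) (nb u)) ord)"

lemma fold_inner: "fold (\<lambda>w st'. scan_step E c u w st') l s = fold (stp E c) (map (Pair u) l) s"
  by (induction l arbitrary: s) (auto simp: stp_def)

lemma fold_outer: "fold (\<lambda>u st. fold (\<lambda>w st'. scan_step E c u w st') (nb u) st) ord s
   = fold (stp E c) (steps ord nb) s"
  by (induction ord arbitrary: s) (auto simp: steps_def fold_inner)

lemma scan_run_eq: "scan_run E c ord nb = run E c (steps ord nb)"
  by (simp add: scan_run_def run_def fold_outer)

lemma steps_set: "(t, w) \<in> set (steps ord nb) \<longleftrightarrow> t \<in> set ord \<and> w \<in> set (nb t)"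
  by (auto simp: steps_def)

lemma steps_distinct: "distinct ord \<Longrightarrow> (\<forall>u\<in>set ord. distinct (nb u)) \<Longrightarrow> distinct (steps ord nb)"
proof (induction ord)
  case Nil then show ?case by (simp add: steps_def)
next
  case (Cons a ord)
  have "distinct (map (Pair a) (nb a))" using Cons.prems by (simp add: distinct_map inj_on_def)
  moreover have "set (map (Pair a) (nb a)) \<inter> set (steps ord nb) = {}"
    using Cons.prems steps_set[of _ _ ord nb] by auto
  ultimately show ?case using Cons by (simp add: steps_def)
qed

theorem mainTheorem6:
  fixes V :: "'a set" and E :: "'a set set" and c :: 'a
    and ord :: "'a list" and nb :: "'a \<Rightarrow> 'a list" and e f :: "'a set"
  assumes "simple_graph V E" and "connected_graph V E" and "c \<in> V"
    and "valid_scan_order E c ord nb"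
    and "e \<in> inc_edges E c" and "f \<in> inc_edges E c" and "e \<noteq> f"
  shows "(e, f) \<in> (alpha_bar_c E c ord nb \<union> beta_c E c ord nb)\<^sup>+ \<longleftrightarrow> (e, f) \<in> (dv E c)\<^sup>+"
proof -
  have sg: "finite V" "\<And>e. e \<in> E \<Longrightarrow> \<exists>u v. e = {u, v} \<and> u \<noteq> v \<and> u \<in> V \<and> v \<in> V"
    using assms(1) by (auto simp: simple_graph_def)
  have vo: "distinct ord" "set ord = nbhd E c" "\<And>u. u \<in> nbhd E c \<Longrightarrow> distinct (nb u) \<and> set (nb u) = nbhd E u - {c}"
    using assms(4) by (auto simp: valid_scan_order_def)
  interpret S E c "steps ord nb"
  proof
    fix a show "a \<notin> nbhd E a"
    proof
      assume "a \<in> nbhd E a"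
      then have "{a} \<in> E" by (simp add: nbhd_def)
      then show False using sg(2) by (metis doubleton_eq_iff insert_absorb2)
    qed
  next
    fix a have "nbhd E a \<subseteq> V"
    proof
      fix y assume "y \<in> nbhd E a"
      then have "{a,y} \<in> E" by (simp add: nbhd_def)
      then show "y \<in> V" using sg(2) by (metis doubleton_eq_iff)
    qed
    then show "finite (nbhd E a)" using sg(1) finite_subset by blast
  next
    show "distinct (steps ord nb)" using steps_distinct vo by auto
  next
    fix e assume "e \<in> E" then show "\<exists>a b. e = {a,b} \<and> a \<noteq> b" using sg(2) by blast
  next
    fix t w show "(t, w) \<in> set (steps ord nb) \<longleftrightarrow> t \<in> nbhd E c \<and> w \<in> nbhd E t \<and> w \<noteq> c"
      using vo by (auto simp: steps_set)
  qed
  have "alpha_bar_c E c ord nb = Al" "beta_c E c ord nb = Bt"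
    by (simp_all add: alpha_bar_c_def beta_c_def Al_def Bt_def scan_I_def scan_A_def scan_run_eq)
  then show ?thesis using main_S[OF assms(5,6,7)] by simp
qed

end
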